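(* Let $(\mathbb{P},\le,f)$ be a forcing property for $\mathcal{L}_A$. For all $p\in\mathbb{P}$ and sentences of $\mathcal{L}_A(C)$ of the indicated forms: $F^w_p(\neg\varphi)=1-\inf_{q\le p}F^w_q(\varphi)$; $F^w_p(\tfrac12\varphi)=\tfrac12F^w_p(\varphi)$; $F^w_p(\varphi\dotplus\psi)=\sup_{q\le p}\inf_{q'\le q}\min\big(F^w_{q'}(\varphi)+F^w_{q'}(\psi),1\big)$; $F^w_p(\bigwedge\Phi)=\sup_{q\le p}\inf_{q'\le q}\inf_{\varphi\in\Phi}F^w_{q'}(\varphi)$; $F^w_p(\inf_x\varphi(x))=\sup_{q\le p}\inf_{q'\le q}\inf_{c\in C}F^w_{q'}(\varphi(c))$.
   Context: $\mathcal{L}$ is a countable continuous signature; formulas of $\mathcal{L}_{\omega_1,\omega}$ are built from atomic formulas using $\neg$, $\tfrac12$, $\dotplus$, countable conjunctions $\bigwedge$ and $\inf_x$. $\mathcal{L}_A$ is a countable fragment, $C=\{c_i:i<\omega\}$ new constants, $\mathcal{L}_A(C)$ the smallest countable fragment of $\mathcal{L}_{\omega_1,\omega}(C)$ containing $\mathcal{L}_A$, $\mathcal{L}_A^{as}(C)$ its atomic sentences, $\mathcal{T}(C)$ closed terms. A forcing property $(\mathbb{P},\le,f)$: poset with $f_p\colon\mathcal{L}_A^{as}(C)\to[0,1]$ such that (1) $p\le q\Rightarrow f_p\le f_q$; (2) for every $p$, $\varepsilon>0$, $\tau,\sigma\in\mathcal{T}(C)$, atomic $\varphi(x)$ there are $q\le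 p$, $c\in C$ with $f_q(d(\tau,c))<\varepsilon$, $f_q(d(\tau,\sigma))<f_p(d(\sigma,\tau))+\varepsilon$, and if $f_p(d(\tau,\sigma))<\delta_{\varphi,x}(\varepsilon)$ then $f_q(\varphi(\sigma))<f_p(\varphi(\tau))+\varepsilon$. $F_p$ on sentences: $f_p$ on atomics; $F_p(\neg\varphi)=1-\inf_{q\le p}F_q(\varphi)$; $F_p(\tfrac12\varphi)=\tfrac12F_p(\varphi)$; $F_p(\varphi\dotplus\psi)=\min(F_p(\varphi)+F_p(\psi),1)$; $F_p(\bigwedge\Phi)=\inf_{\varphi\in\Phi}F_p(\varphi)$; $F_p(\inf_x\varphi)=\inf_{c\in C}F_p(\varphi(c))$. Weak forcing: $F^w_p(\varphi)=\sup_{q\le p}\inf_{q'\le q}F_{q'}(\varphi)$. *)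

theory Defs
  imports Complex_Main "HOL-Library.Countable"
begin

text \<open>Terms over function symbols of type 'f (arities given by a function),
  variables (Var n) and the new constants C = {c_i} (Cst i).\<close>
datatype 'f trm = Var nat | Cst nat | Fn 'f "'f trm list"

datatype ('f,'r) atom = ADist "'f trm" "'f trm" | ARel 'r "'f trm list"

text \<open>Formulas: atomic, negation, one half, truncated sum, countable conjunction
  (of the countable set range Phi), and inf_x.\<close>
datatype ('f,'r) fml =
    Atom "('f,'r) atom"
  | Neg "('f,'r) fml"
  | Half "('f,'r) fml"
  | Dplus "('f,'r) fml" "('f,'r) fml"
  | Conj "nat \<Rightarrow> ('f,'r) fml"
  | Infx nat "('f,'r) fml"

fun vars_trm :: "'f trm \<Rightarrow> nat set" where
  "vars_trm (Var n) = {n}"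
| "vars_trm (Cst i) = {}"
| "vars_trm (Fn g ts) = (\<Union>t\<in>set ts. vars_trm t)"

fun wf_trm :: "('f \<Rightarrow> nat) \<Rightarrow> 'f trm \<Rightarrow> bool" where
  "wf_trm ar (Var n) = True"
| "wf_trm ar (Cst i) = True"
| "wf_trm ar (Fn g ts) = (length ts = ar g \<and> (\<forall>t\<in>set ts. wf_trm ar t))"

definition closed_trm :: "'f trm \<Rightarrow> bool" where
  "closed_trm t \<longleftrightarrow> vars_trm t = {}"

fun tsubst :: "(nat \<Rightarrow> 'f trm) \<Rightarrow> 'f trm \<Rightarrow> 'f trm" where
  "tsubst \<rho> (Var n) = \<rho> n"
| "tsubst \<rho> (Cst i) = Cst i"
| "tsubst \<rho> (Fn g ts) = Fn g (map (tsubst \<rho>) ts)"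

fun asubst :: "(nat \<Rightarrow> 'f trm) \<Rightarrow> ('f,'r) atom \<Rightarrow> ('f,'r) atom" where
  "asubst \<rho> (ADist t s) = ADist (tsubst \<rho> t) (tsubst \<rho> s)"
| "asubst \<rho> (ARel R ts) = ARel R (map (tsubst \<rho>) ts)"

fun fv_atom :: "('f,'r) atom \<Rightarrow> nat set" where
  "fv_atom (ADist t s) = vars_trm t \<union> vars_trm s"
| "fv_atom (ARel R ts) = (\<Union>t\<in>set ts. vars_trm t)"

fun wf_atom :: "('f \<Rightarrow> nat) \<Rightarrow> ('r \<Rightarrow> nat) \<Rightarrow> ('f,'r) atom \<Rightarrow> bool" where
  "wf_atom arF arR (ADist t s) = (wf_trm arF t \<and> wf_trm arF s)"
| "wf_atom arF arR (ARel R ts) = (length ts = arR R \<and> (\<forall>t\<in>set ts. wf_trm arF t))"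

primrec fv_fml :: "('f,'r) fml \<Rightarrow> nat set" where
  "fv_fml (Atom a) = fv_atom a"
| "fv_fml (Neg \<phi>) = fv_fml \<phi>"
| "fv_fml (Half \<phi>) = fv_fml \<phi>"
| "fv_fml (Dplus \<phi> \<psi>) = fv_fml \<phi> \<union> fv_fml \<psi>"
| "fv_fml (Conj \<Phi>) = (\<Union>n. fv_fml (\<Phi> n))"
| "fv_fml (Infx x \<phi>) = fv_fml \<phi> - {x}"

primrec wf_fml :: "('f \<Rightarrow> nat) \<Rightarrow> ('r \<Rightarrow> nat) \<Rightarrow> ('f,'r) fml \<Rightarrow> bool" where
  "wf_fml arF arR (Atom a) = wf_atom arF arR a"
| "wf_fml arF arR (Neg \<phi>) = wf_fml arF arR \<phi>"
| "wf_fml arF arR (Half \<phi>) = wf_fml arF arR \<phi>"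
| "wf_fml arF arR (Dplus \<phi> \<psi>) = (wf_fml arF arR \<phi> \<and> wf_fml arF arR \<psi>)"
| "wf_fml arF arR (Conj \<Phi>) = (\<forall>n. wf_fml arF arR (\<Phi> n))"
| "wf_fml arF arR (Infx x \<phi>) = wf_fml arF arR \<phi>"

definition sentence :: "('f,'r) fml \<Rightarrow> bool" where
  "sentence \<phi> \<longleftrightarrow> fv_fml \<phi> = {}"

text \<open>Substitution of a closed term for the free occurrences of variable x
  (capture-free because only closed terms are substituted).\<close>
primrec subst_fml :: "nat \<Rightarrow> 'f trm \<Rightarrow> ('f,'r) fml \<Rightarrow> ('f,'r) fml" where
  "subst_fml x t (Atom a) = Atom (asubst (Var(x := t)) a)"
| "subst_fml x t (Neg \<phi>) = Neg (subst_fml x t \<phi>)"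
| "subst_fml x t (Half \<phi>) = Half (subst_fml x t \<phi>)"
| "subst_fml x t (Dplus \<phi> \<psi>) = Dplus (subst_fml x t \<phi>) (subst_fml x t \<psi>)"
| "subst_fml x t (Conj \<Phi>) = Conj (\<lambda>n. subst_fml x t (\<Phi> n))"
| "subst_fml x t (Infx y \<phi>) = (if y = x then Infx y \<phi> else Infx y (subst_fml x t \<phi>))"

text \<open>The poset (P,<=) is the type 'p with its order. f p a is f_p on atomic
  sentences a. delta a x eps is the modulus delta_{a,x}(eps) of the signature.\<close>
definition forcing_property ::
  "('f \<Rightarrow> nat) \<Rightarrow> ('r \<Rightarrow> nat) \<Rightarrow> (('f,'r) atom \<Rightarrow> nat \<Rightarrow> real \<Rightarrow> real)
   \<Rightarrow> ('p::order \<Rightarrow> ('f,'r) atom \<Rightarrow> real) \<Rightarrow> bool" where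
  "forcing_property arF arR delta f \<longleftrightarrow>
     (\<forall>p a. wf_atom arF arR a \<and> fv_atom a = {} \<longrightarrow> 0 \<le> f p a \<and> f p a \<le> 1)
   \<and> (\<forall>p q a. p \<le> q \<and> wf_atom arF arR a \<and> fv_atom a = {} \<longrightarrow> f p a \<le> f q a)
   \<and> (\<forall>p \<epsilon> \<tau> \<sigma> a x. \<epsilon> > 0 \<and> closed_trm \<tau> \<and> closed_trm \<sigma> \<and> wf_trm arF \<tau> \<and> wf_trm arF \<sigma>
        \<and> wf_atom arF arR a \<and> fv_atom a \<subseteq> {x} \<longrightarrow>
        (\<exists>q c. q \<le> p
           \<and> f q (ADist \<tau> (Cst c)) < \<epsilon>
           \<and> f q (ADist \<tau> \<sigma>) < f p (ADist \<sigma> \<tau>) + \<epsilon>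
           \<and> (f p (ADist \<tau> \<sigma>) < delta a x \<epsilon> \<longrightarrow>
                f q (asubst (Var(x := \<sigma>)) a) < f p (asubst (Var(x := \<tau>)) a) + \<epsilon>)))"

text \<open>F_p, defined by recursion with an assignment rho of terms to variables;
  on sentences (rho = Var, i.e. no substitution) the clause for inf_x reads
  F_p(inf_x phi) = inf_c F_p(phi(c)).\<close>
primrec Fenv :: "('p::order \<Rightarrow> ('f,'r) atom \<Rightarrow> real) \<Rightarrow> (nat \<Rightarrow> 'f trm)
                   \<Rightarrow> ('f,'r) fml \<Rightarrow> 'p \<Rightarrow> real" where
  "Fenv f \<rho> (Atom a) p = f p (asubst \<rho> a)"
| "Fenv f \<rho> (Neg \<phi>) p = 1 - (INF q\<in>{..p}. Fenv f \<rho> \<phi> q)"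
| "Fenv f \<rho> (Half \<phi>) p = Fenv f \<rho> \<phi> p / 2"
| "Fenv f \<rho> (Dplus \<phi> \<psi>) p = min (Fenv f \<rho> \<phi> p + Fenv f \<rho> \<psi> p) 1"
| "Fenv f \<rho> (Conj \<Phi>) p = (INF n. Fenv f \<rho> (\<Phi> n) p)"
| "Fenv f \<rho> (Infx x \<phi>) p = (INF c. Fenv f (\<rho>(x := Cst c)) \<phi> p)"

definition Fval :: "('p::order \<Rightarrow> ('f,'r) atom \<Rightarrow> real) \<Rightarrow> 'p \<Rightarrow> ('f,'r) fml \<Rightarrow> real" where
  "Fval f p \<phi> = Fenv f Var \<phi> p"

definition Fw :: "('p::order \<Rightarrow> ('f,'r) atom \<Rightarrow> real) \<Rightarrow> 'p \<Rightarrow> ('f,'r) fml \<Rightarrow> real" where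
  "Fw f p \<phi> = (SUP q\<in>{..p}. INF q'\<in>{..q}. Fval f q' \<phi>)"

end

theory Submission
  imports Defs
begin

definition wop :: "('p::order \<Rightarrow> real) \<Rightarrow> 'p \<Rightarrow> real" where
  "wop g p = (SUP q\<in>{..p}. INF q'\<in>{..q}. g q')"

lemma Fw_wop: "Fw f p \<phi> = wop (\<lambda>q. Fval f q \<phi>) p"
  by (simp add: Fw_def wop_def)

lemma inf_bnd:
  fixes g :: "'p::order \<Rightarrow> real"
  assumes b: "\<And>q. 0 \<le> g q \<and> g q \<le> 1"
  shows "0 \<le> (INF q'\<in>{..q}. g q')" "(INF q'\<in>{..q}. g q') \<le> 1"
    "r \<le> q \<Longrightarrow> (INF q'\<in>{..q}. g q') \<le> g r"
    "bdd_below (g ` A)" "bdd_above (g ` A)"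
proof -
  show bb: "bdd_below (g ` A)" for A using b by (intro bdd_belowI[where m=0]) auto
  show "bdd_above (g ` A)" using b by (intro bdd_aboveI[where M=1]) auto
  show "0 \<le> (INF q'\<in>{..q}. g q')" using b by (intro cINF_greatest) auto
  show "r \<le> q \<Longrightarrow> (INF q'\<in>{..q}. g q') \<le> g r" by (rule cINF_lower[OF bb]) auto
  have "(INF q'\<in>{..q}. g q') \<le> g q" by (rule cINF_lower[OF bb]) auto
  then show "(INF q'\<in>{..q}. g q') \<le> 1" using b[of q] by linarith
qed

lemma wop_bnd:
  fixes g :: "'p::order \<Rightarrow> real"
  assumes b: "\<And>q. 0 \<le> g q \<and> g q \<le> 1"
  shows "0 \<le> wop g p \<and> wop g p \<le> 1"
proof -
  have ba: "bdd_above ((\<lambda>q. INF q'\<in>{..q}. g q') ` A)" for A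
    using inf_bnd[where g=g, OF b] by (intro bdd_aboveI[where M=1]) auto
  have "(INF q'\<in>{..p}. g q') \<le> wop g p" unfolding wop_def
    by (rule cSUP_upper[OF _ ba]) auto
  moreover have "wop g p \<le> 1" unfolding wop_def
    using inf_bnd[where g=g, OF b] by (intro cSUP_least) auto
  ultimately show ?thesis using inf_bnd(1)[where g=g, OF b, of p] by linarith
qed

lemma wop_ge_inf:
  fixes g :: "'p::order \<Rightarrow> real"
  assumes b: "\<And>q. 0 \<le> g q \<and> g q \<le> 1"
  shows "(INF q'\<in>{..q}. g q') \<le> wop g q"
proof -
  have ba: "bdd_above ((\<lambda>q. INF q'\<in>{..q}. g q') ` A)" for A
    using inf_bnd[where g=g, OF b] by (intro bdd_aboveI[where M=1]) auto
  show ?thesis unfolding wop_def by (rule cSUP_upper[OF _ ba]) auto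
qed

lemma wop_le_mono:
  fixes g :: "'p::order \<Rightarrow> real"
  assumes b: "\<And>q. 0 \<le> g q \<and> g q \<le> 1" and m: "\<And>q q'. q \<le> q' \<Longrightarrow> g q \<le> g q'"
  shows "wop g q \<le> g q"
  unfolding wop_def
proof (rule cSUP_least)
  fix r assume "r \<in> {..q}"
  then have "(INF q'\<in>{..r}. g q') \<le> g r" using inf_bnd(3)[where g=g, OF b] by auto
  also have "\<dots> \<le> g q" using m \<open>r \<in> {..q}\<close> by auto
  finally show "(INF q'\<in>{..r}. g q') \<le> g q" .
qed auto

lemma wop_mono:
  fixes g :: "'p::order \<Rightarrow> real"
  assumes b: "\<And>q. 0 \<le> g q \<and> g q \<le> 1" and "p \<le> p'"
  shows "wop g p \<le> wop g p'"
proof -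
  have ba: "bdd_above ((\<lambda>q. INF q'\<in>{..q}. g q') ` A)" for A
    using inf_bnd[where g=g, OF b] by (intro bdd_aboveI[where M=1]) auto
  show ?thesis unfolding wop_def
  proof (rule cSUP_least)
    fix q assume "q \<in> {..p}"
    then show "(INF q'\<in>{..q}. g q') \<le> (SUP q\<in>{..p'}. INF q'\<in>{..q}. g q')"
      using assms(2) by (intro cSUP_upper[OF _ ba]) auto
  qed auto
qed

lemma wop_le:
  fixes g h :: "'p::order \<Rightarrow> real"
  assumes bg: "\<And>q. 0 \<le> g q \<and> g q \<le> 1" and bh: "\<And>q. 0 \<le> h q \<and> h q \<le> 1"
    and le: "\<And>q. (INF r\<in>{..q}. g r) \<le> h q"
  shows "wop g p \<le> wop h p"
proof -
  have ba: "bdd_above ((\<lambda>q. INF q'\<in>{..q}. h q') ` A)" for A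
    using inf_bnd[where g=h, OF bh] by (intro bdd_aboveI[where M=1]) auto
  show ?thesis unfolding wop_def
  proof (rule cSUP_least)
    fix q assume q: "q \<in> {..p}"
    have "(INF q'\<in>{..q}. g q') \<le> (INF q'\<in>{..q}. h q')"
    proof (rule cINF_greatest)
      fix q' assume q': "q' \<in> {..q}"
      have "(INF q'\<in>{..q}. g q') \<le> (INF r\<in>{..q'}. g r)"
        using q' by (intro cINF_greatest) (auto intro: inf_bnd(3)[where g=g, OF bg] order_trans)
      also have "\<dots> \<le> h q'" by (rule le)
      finally show "(INF q'\<in>{..q}. g q') \<le> h q'" .
    qed auto
    also have "\<dots> \<le> (SUP q\<in>{..p}. INF q'\<in>{..q}. h q')"
      using q by (intro cSUP_upper[OF _ ba])
    finally show "(INF q'\<in>{..q}. g q') \<le> (SUP q\<in>{..p}. INF q'\<in>{..q}. h q')" .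
  qed auto
qed

lemma wop_approx:
  fixes g :: "'p::order \<Rightarrow> real"
  assumes b: "\<And>q. 0 \<le> g q \<and> g q \<le> 1" and e: "e > 0"
  shows "\<exists>r\<le>q. g r < wop g q + e"
proof -
  have lt: "(INF q'\<in>{..q}. g q') < (INF q'\<in>{..q}. g q') + e" using e by simp
  have ne: "{..q} \<noteq> {}" by auto
  have "\<exists>r\<in>{..q}. g r < (INF q'\<in>{..q}. g q') + e"
    using iffD1[OF cINF_less_iff[OF ne inf_bnd(4)[where g=g, OF b]] lt] .
  then obtain r where "r \<in> {..q}" "g r < (INF q'\<in>{..q}. g q') + e" by blast
  then show ?thesis using wop_ge_inf[where g=g, OF b, of q] by force
qed

lemma INF_cminus:
  fixes h :: "'a \<Rightarrow> real"
  assumes "A \<noteq> {}" "bdd_above (h ` A)"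
  shows "(INF x\<in>A. c - h x) = c - (SUP x\<in>A. h x)"
proof (rule order_antisym)
  obtain M where M: "\<And>x. x \<in> A \<Longrightarrow> h x \<le> M" using assms(2) by (auto simp: bdd_above_def)
  have bb: "bdd_below ((\<lambda>x. c - h x) ` A)"
    by (rule bdd_belowI[where m="c - M"]) (auto dest: M)
  have "(SUP x\<in>A. h x) \<le> c - (INF x\<in>A. c - h x)"
  proof (rule cSUP_least[OF assms(1)])
    fix x assume "x \<in> A"
    then have "(INF x\<in>A. c - h x) \<le> c - h x" by (rule cINF_lower[OF bb])
    then show "h x \<le> c - (INF x\<in>A. c - h x)" by linarith
  qed
  then show "(INF x\<in>A. c - h x) \<le> c - (SUP x\<in>A. h x)" by linarith
  show "c - (SUP x\<in>A. h x) \<le> (INF x\<in>A. c - h x)"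
  proof (rule cINF_greatest[OF assms(1)])
    fix x assume "x \<in> A"
    then have "h x \<le> (SUP x\<in>A. h x)" by (rule cSUP_upper[OF _ assms(2)])
    then show "c - (SUP x\<in>A. h x) \<le> c - h x" by linarith
  qed
qed

lemma SUP_cminus:
  fixes h :: "'a \<Rightarrow> real"
  assumes "A \<noteq> {}" "bdd_below (h ` A)"
  shows "(SUP x\<in>A. c - h x) = c - (INF x\<in>A. h x)"
proof (rule order_antisym)
  obtain M where M: "\<And>x. x \<in> A \<Longrightarrow> M \<le> h x" using assms(2) by (auto simp: bdd_below_def)
  have bb: "bdd_above ((\<lambda>x. c - h x) ` A)"
    by (rule bdd_aboveI[where M="c - M"]) (auto dest: M)
  show "(SUP x\<in>A. c - h x) \<le> c - (INF x\<in>A. h x)"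
  proof (rule cSUP_least[OF assms(1)])
    fix x assume "x \<in> A"
    then have "(INF x\<in>A. h x) \<le> h x" by (rule cINF_lower[OF assms(2)])
    then show "c - h x \<le> c - (INF x\<in>A. h x)" by linarith
  qed
  have "c - (SUP x\<in>A. c - h x) \<le> (INF x\<in>A. h x)"
  proof (rule cINF_greatest[OF assms(1)])
    fix x assume "x \<in> A"
    then have "c - h x \<le> (SUP x\<in>A. c - h x)" by (rule cSUP_upper[OF _ bb])
    then show "c - (SUP x\<in>A. c - h x) \<le> h x" by linarith
  qed
  then show "c - (INF x\<in>A. h x) \<le> (SUP x\<in>A. c - h x)" by linarith
qed

lemma INF_half:
  fixes h :: "'a \<Rightarrow> real"
  assumes "A \<noteq> {}" "bdd_below (h ` A)"
  shows "(INF x\<in>A. h x / 2) = (INF x\<in>A. h x) / 2"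
proof (rule order_antisym)
  obtain M where M: "\<And>x. x \<in> A \<Longrightarrow> M \<le> h x" using assms(2) by (auto simp: bdd_below_def)
  have bb: "bdd_below ((\<lambda>x. h x / 2) ` A)"
    by (rule bdd_belowI[where m="M / 2"]) (auto dest: M)
  show "(INF x\<in>A. h x) / 2 \<le> (INF x\<in>A. h x / 2)"
  proof (rule cINF_greatest[OF assms(1)])
    fix x assume "x \<in> A"
    then have "(INF x\<in>A. h x) \<le> h x" by (rule cINF_lower[OF assms(2)])
    then show "(INF x\<in>A. h x) / 2 \<le> h x / 2" by linarith
  qed
  have "2 * (INF x\<in>A. h x / 2) \<le> (INF x\<in>A. h x)"
  proof (rule cINF_greatest[OF assms(1)])
    fix x assume "x \<in> A"
    then have "(INF x\<in>A. h x / 2) \<le> h x / 2" by (rule cINF_lower[OF bb])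
    then show "2 * (INF x\<in>A. h x / 2) \<le> h x" by linarith
  qed
  then show "(INF x\<in>A. h x / 2) \<le> (INF x\<in>A. h x) / 2" by linarith
qed

lemma SUP_half:
  fixes h :: "'a \<Rightarrow> real"
  assumes "A \<noteq> {}" "bdd_above (h ` A)"
  shows "(SUP x\<in>A. h x / 2) = (SUP x\<in>A. h x) / 2"
proof (rule order_antisym)
  obtain M where M: "\<And>x. x \<in> A \<Longrightarrow> h x \<le> M" using assms(2) by (auto simp: bdd_above_def)
  have bb: "bdd_above ((\<lambda>x. h x / 2) ` A)"
    by (rule bdd_aboveI[where M="M / 2"]) (auto dest: M)
  show "(SUP x\<in>A. h x / 2) \<le> (SUP x\<in>A. h x) / 2"
  proof (rule cSUP_least[OF assms(1)])
    fix x assume "x \<in> A"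
    then have "h x \<le> (SUP x\<in>A. h x)" by (rule cSUP_upper[OF _ assms(2)])
    then show "h x / 2 \<le> (SUP x\<in>A. h x) / 2" by linarith
  qed
  have "(SUP x\<in>A. h x) \<le> 2 * (SUP x\<in>A. h x / 2)"
  proof (rule cSUP_least[OF assms(1)])
    fix x assume "x \<in> A"
    then have "h x / 2 \<le> (SUP x\<in>A. h x / 2)" by (rule cSUP_upper[OF _ bb])
    then show "h x \<le> 2 * (SUP x\<in>A. h x / 2)" by linarith
  qed
  then show "(SUP x\<in>A. h x) / 2 \<le> (SUP x\<in>A. h x / 2)" by linarith
qed

lemma neg_abs:
  fixes g :: "'p::order \<Rightarrow> real"
  assumes b: "\<And>q. 0 \<le> g q \<and> g q \<le> 1"
  shows "wop (\<lambda>q. 1 - (INF r\<in>{..q}. g r)) p = 1 - (INF q\<in>{..p}. wop g q)"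
proof -
  have ba: "bdd_above ((\<lambda>q. INF q'\<in>{..q}. g q') ` A)" for A
    using inf_bnd[where g=g, OF b] by (intro bdd_aboveI[where M=1]) auto
  have bw: "bdd_below (wop g ` A)" for A
    using wop_bnd[where g=g, OF b] by (intro bdd_belowI[where m=0]) auto
  have "wop (\<lambda>q. 1 - (INF r\<in>{..q}. g r)) p = (SUP q\<in>{..p}. 1 - wop g q)"
    unfolding wop_def by (simp add: INF_cminus[OF _ ba])
  also have "\<dots> = 1 - (INF q\<in>{..p}. wop g q)"
    by (rule SUP_cminus[OF _ bw]) auto
  finally show ?thesis .
qed

lemma half_abs:
  fixes g :: "'p::order \<Rightarrow> real"
  assumes b: "\<And>q. 0 \<le> g q \<and> g q \<le> 1"
  shows "wop (\<lambda>q. g q / 2) p = wop g p / 2"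
proof -
  have ba: "bdd_above ((\<lambda>q. INF q'\<in>{..q}. g q') ` A)" for A
    using inf_bnd[where g=g, OF b] by (intro bdd_aboveI[where M=1]) auto
  show ?thesis unfolding wop_def
    by (simp add: INF_half[OF _ inf_bnd(4)[where g=g, OF b]] SUP_half[OF _ ba])
qed

lemma dplus_abs:
  fixes g1 g2 :: "'p::order \<Rightarrow> real"
  assumes b1: "\<And>q. 0 \<le> g1 q \<and> g1 q \<le> 1" and m1: "\<And>q q'. q \<le> q' \<Longrightarrow> g1 q \<le> g1 q'"
    and b2: "\<And>q. 0 \<le> g2 q \<and> g2 q \<le> 1" and m2: "\<And>q q'. q \<le> q' \<Longrightarrow> g2 q \<le> g2 q'"
  shows "wop (\<lambda>q. min (g1 q + g2 q) 1) p = wop (\<lambda>q. min (wop g1 q + wop g2 q) 1) p"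
proof -
  have bh: "0 \<le> min (g1 q + g2 q) 1 \<and> min (g1 q + g2 q) 1 \<le> 1" for q
    using b1[of q] b2[of q] by auto
  have bk: "0 \<le> min (wop g1 q + wop g2 q) 1 \<and> min (wop g1 q + wop g2 q) 1 \<le> 1" for q
    using wop_bnd[where g=g1, OF b1, of q] wop_bnd[where g=g2, OF b2, of q] by auto
  show ?thesis
  proof (rule order_antisym)
    show "wop (\<lambda>q. min (wop g1 q + wop g2 q) 1) p \<le> wop (\<lambda>q. min (g1 q + g2 q) 1) p"
    proof (rule wop_le[OF bk bh])
      fix q
      have "(INF r\<in>{..q}. min (wop g1 r + wop g2 r) 1) \<le> min (wop g1 q + wop g2 q) 1"
        by (rule inf_bnd(3)[where g="\<lambda>q. min (wop g1 q + wop g2 q) 1", OF bk]) simp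
      also have "\<dots> \<le> min (g1 q + g2 q) 1"
        using wop_le_mono[where g=g1, OF b1 m1, of q] wop_le_mono[where g=g2, OF b2 m2, of q] by auto
      finally show "(INF r\<in>{..q}. min (wop g1 r + wop g2 r) 1) \<le> min (g1 q + g2 q) 1" .
    qed
    show "wop (\<lambda>q. min (g1 q + g2 q) 1) p \<le> wop (\<lambda>q. min (wop g1 q + wop g2 q) 1) p"
    proof (rule wop_le[OF bh bk])
      fix q
      show "(INF r\<in>{..q}. min (g1 r + g2 r) 1) \<le> min (wop g1 q + wop g2 q) 1"
      proof (rule field_le_epsilon)
        fix e :: real assume e: "0 < e"
        obtain r1 where r1: "r1 \<le> q" "g1 r1 < wop g1 q + e/2"
          using wop_approx[where g=g1, OF b1, of "e/2" q] e by auto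
        obtain r2 where r2: "r2 \<le> r1" "g2 r2 < wop g2 r1 + e/2"
          using wop_approx[where g=g2, OF b2, of "e/2" r1] e by auto
        have "wop g2 r1 \<le> wop g2 q" by (rule wop_mono[where g=g2, OF b2 r1(1)])
        moreover have "g1 r2 \<le> g1 r1" by (rule m1[OF r2(1)])
        moreover have "(INF r\<in>{..q}. min (g1 r + g2 r) 1) \<le> min (g1 r2 + g2 r2) 1"
          by (rule inf_bnd(3)[where g="\<lambda>q. min (g1 q + g2 q) 1", OF bh]) (use r1 r2 in auto)
        moreover have "g1 r2 + g2 r2 \<le> wop g1 q + wop g2 q + e"
          using calculation(1,2) r1 r2 by linarith
        then have "min (g1 r2 + g2 r2) 1 \<le> min (wop g1 q + wop g2 q) 1 + e"
          using e by (simp add: min_def)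
        ultimately show "(INF r\<in>{..q}. min (g1 r + g2 r) 1) \<le> min (wop g1 q + wop g2 q) 1 + e"
          by linarith
      qed
    qed
  qed
qed

lemma conj_abs:
  fixes G :: "'i \<Rightarrow> 'p::order \<Rightarrow> real"
  assumes b: "\<And>i q. 0 \<le> G i q \<and> G i q \<le> 1" and m: "\<And>i q q'. q \<le> q' \<Longrightarrow> G i q \<le> G i q'"
  shows "wop (\<lambda>q. INF i. G i q) p = wop (\<lambda>q. INF i. wop (G i) q) p"
proof -
  have bh: "0 \<le> (INF i. G i q) \<and> (INF i. G i q) \<le> 1" for q
  proof
    show "0 \<le> (INF i. G i q)" using b by (intro cINF_greatest) auto
    have "(INF i. G i q) \<le> G undefined q"
      using b by (intro cINF_lower bdd_belowI[where m=0]) auto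
    then show "(INF i. G i q) \<le> 1" using b[of undefined q] by linarith
  qed
  have bw: "\<And>i q. 0 \<le> wop (G i) q \<and> wop (G i) q \<le> 1"
    using wop_bnd[where g="G _", OF b] by blast
  have bbw: "bdd_below (range (\<lambda>i. wop (G i) q))" for q
    using bw by (intro bdd_belowI[where m=0]) auto
  have bbG: "bdd_below (range (\<lambda>i. G i q))" for q
    using b by (intro bdd_belowI[where m=0]) auto
  have bk: "0 \<le> (INF i. wop (G i) q) \<and> (INF i. wop (G i) q) \<le> 1" for q
  proof
    show "0 \<le> (INF i. wop (G i) q)" using bw by (intro cINF_greatest) auto
    have "(INF i. wop (G i) q) \<le> wop (G undefined) q"
      by (rule cINF_lower[OF bbw]) simp
    then show "(INF i. wop (G i) q) \<le> 1" using bw[of undefined q] by linarith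
  qed
  show ?thesis
  proof (rule order_antisym)
    show "wop (\<lambda>q. INF i. G i q) p \<le> wop (\<lambda>q. INF i. wop (G i) q) p"
    proof (rule wop_le[OF bh bk])
      fix q
      show "(INF r\<in>{..q}. INF i. G i r) \<le> (INF i. wop (G i) q)"
      proof (rule cINF_greatest)
        fix i
        have "(INF r\<in>{..q}. INF i. G i r) \<le> (INF r\<in>{..q}. G i r)"
        proof (rule cINF_greatest)
          fix r assume r: "r \<in> {..q}"
          have "(INF r\<in>{..q}. INF i. G i r) \<le> (INF i. G i r)"
            by (rule inf_bnd(3)[where g="\<lambda>r. INF i. G i r", OF bh]) (use r in auto)
          also have "\<dots> \<le> G i r" by (rule cINF_lower[OF bbG]) simp
          finally show "(INF r\<in>{..q}. INF i. G i r) \<le> G i r" .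
        qed auto
        also have "\<dots> \<le> wop (G i) q" by (rule wop_ge_inf[where g="G i", OF b])
        finally show "(INF r\<in>{..q}. INF i. G i r) \<le> wop (G i) q" .
      qed auto
    qed
    show "wop (\<lambda>q. INF i. wop (G i) q) p \<le> wop (\<lambda>q. INF i. G i q) p"
    proof (rule wop_le[OF bk bh])
      fix q
      have "(INF r\<in>{..q}. INF i. wop (G i) r) \<le> (INF i. wop (G i) q)"
        by (rule inf_bnd(3)[where g="\<lambda>r. INF i. wop (G i) r", OF bk]) simp
      also have "\<dots> \<le> (INF i. G i q)"
      proof (rule cINF_greatest)
        fix i
        have "(INF i. wop (G i) q) \<le> wop (G i) q" by (rule cINF_lower[OF bbw]) simp
        also have "\<dots> \<le> G i q" by (rule wop_le_mono[where g="G i", OF b m])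
        finally show "(INF i. wop (G i) q) \<le> G i q" .
      qed auto
      finally show "(INF r\<in>{..q}. INF i. wop (G i) r) \<le> (INF i. G i q)" .
    qed
  qed
qed

lemma vars_tsubst: "vars_trm (tsubst \<rho> t) = (\<Union>n\<in>vars_trm t. vars_trm (\<rho> n))"
  by (induction t) auto

lemma wf_tsubst: "wf_trm ar t \<Longrightarrow> (\<And>n. wf_trm ar (\<rho> n)) \<Longrightarrow> wf_trm ar (tsubst \<rho> t)"
  by (induction t) auto

lemma tsubst_closed: "vars_trm t = {} \<Longrightarrow> tsubst \<rho> t = t"
proof (induction t)
  case (Fn g ts)
  then have "map (tsubst \<rho>) ts = ts" by (auto intro: map_idI)
  then show ?case by simp
qed auto

lemma tsubst_tsubst: "tsubst \<rho> (tsubst \<sigma> t) = tsubst (\<lambda>n. tsubst \<rho> (\<sigma> n)) t"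
  by (induction t) auto

lemma asubst_ok:
  assumes "wf_atom arF arR a" "\<And>n. wf_trm arF (\<rho> n)" "\<And>n. n \<in> fv_atom a \<Longrightarrow> vars_trm (\<rho> n) = {}"
  shows "wf_atom arF arR (asubst \<rho> a) \<and> fv_atom (asubst \<rho> a) = {}"
  using assms by (cases a) (auto simp: vars_tsubst wf_tsubst)

lemma Fenv_props:
  fixes f :: "'p::order \<Rightarrow> ('f,'r) atom \<Rightarrow> real"
  assumes fp: "forcing_property arF arR delta f"
  shows "wf_fml arF arR \<phi> \<Longrightarrow> (\<And>n. wf_trm arF (\<rho> n)) \<Longrightarrow>
    (\<And>n. n \<in> fv_fml \<phi> \<Longrightarrow> vars_trm (\<rho> n) = {}) \<Longrightarrow>
    (\<forall>p. 0 \<le> Fenv f \<rho> \<phi> p \<and> Fenv f \<rho> \<phi> p \<le> 1) \<and>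
    (\<forall>p p'. p \<le> p' \<longrightarrow> Fenv f \<rho> \<phi> p \<le> Fenv f \<rho> \<phi> p')"
proof (induction \<phi> arbitrary: \<rho>)
  case (Atom a)
  have ok: "wf_atom arF arR (asubst \<rho> a) \<and> fv_atom (asubst \<rho> a) = {}"
    using Atom by (intro asubst_ok) auto
  show ?case using fp ok unfolding forcing_property_def by auto
next
  case (Neg \<phi>)
  then have IH: "\<And>q. 0 \<le> Fenv f \<rho> \<phi> q \<and> Fenv f \<rho> \<phi> q \<le> 1" by auto
  note ib = inf_bnd[where g="\<lambda>q. Fenv f \<rho> \<phi> q", OF IH]
  have "(INF q\<in>{..p'}. Fenv f \<rho> \<phi> q) \<le> (INF q\<in>{..p}. Fenv f \<rho> \<phi> q)" if "p \<le> p'" for p p'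
    by (rule cINF_greatest) (use that in \<open>auto intro: ib(3) order_trans\<close>)
  then show ?case using ib(1,2) by auto
next
  case (Half \<phi>)
  have "(\<forall>p. 0 \<le> Fenv f \<rho> \<phi> p \<and> Fenv f \<rho> \<phi> p \<le> 1) \<and>
    (\<forall>p p'. p \<le> p' \<longrightarrow> Fenv f \<rho> \<phi> p \<le> Fenv f \<rho> \<phi> p')"
    by (rule Half.IH) (use Half.prems in auto)
  then have A: "\<And>p. 0 \<le> Fenv f \<rho> \<phi> p \<and> Fenv f \<rho> \<phi> p \<le> 1"
    and B: "\<And>p p'. p \<le> p' \<Longrightarrow> Fenv f \<rho> \<phi> p \<le> Fenv f \<rho> \<phi> p'" by auto
  show ?case
  proof (intro conjI allI impI)
    fix p :: 'p show "0 \<le> Fenv f \<rho> (Half \<phi>) p" using A[of p] by simp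
    show "Fenv f \<rho> (Half \<phi>) p \<le> 1" using A[of p] by simp
  next
    fix p p' :: 'p assume "p \<le> p'"
    then show "Fenv f \<rho> (Half \<phi>) p \<le> Fenv f \<rho> (Half \<phi>) p'" using B by simp
  qed
next
  case (Dplus \<phi> \<psi>)
  then have A: "(\<forall>p. 0 \<le> Fenv f \<rho> \<phi> p \<and> Fenv f \<rho> \<phi> p \<le> 1) \<and>
    (\<forall>p p'. p \<le> p' \<longrightarrow> Fenv f \<rho> \<phi> p \<le> Fenv f \<rho> \<phi> p')"
   and B: "(\<forall>p. 0 \<le> Fenv f \<rho> \<psi> p \<and> Fenv f \<rho> \<psi> p \<le> 1) \<and>
    (\<forall>p p'. p \<le> p' \<longrightarrow> Fenv f \<rho> \<psi> p \<le> Fenv f \<rho> \<psi> p')" by auto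
  show ?case
  proof (intro conjI allI impI)
    fix p p' :: 'p assume "p \<le> p'"
    then show "Fenv f \<rho> (Dplus \<phi> \<psi>) p \<le> Fenv f \<rho> (Dplus \<phi> \<psi>) p'"
      using A B by (simp add: min_def) (smt (verit))
  qed (use A B in \<open>auto simp: min_def\<close>)
next
  case (Conj \<Phi>)
  then have IH: "\<And>n. (\<forall>p. 0 \<le> Fenv f \<rho> (\<Phi> n) p \<and> Fenv f \<rho> (\<Phi> n) p \<le> 1) \<and>
    (\<forall>p p'. p \<le> p' \<longrightarrow> Fenv f \<rho> (\<Phi> n) p \<le> Fenv f \<rho> (\<Phi> n) p')"
    by (metis UN_I UNIV_I fv_fml.simps(5) rangeI wf_fml.simps(5))
  have bb: "bdd_below (range (\<lambda>n. Fenv f \<rho> (\<Phi> n) p))" for p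
    using IH by (intro bdd_belowI[where m=0]) auto
  show ?case
  proof (intro conjI allI impI)
    fix p :: 'p
    show "0 \<le> Fenv f \<rho> (Conj \<Phi>) p" using IH by (auto intro: cINF_greatest)
    have "Fenv f \<rho> (Conj \<Phi>) p \<le> Fenv f \<rho> (\<Phi> 0) p" by (simp add: cINF_lower[OF bb])
    moreover have "Fenv f \<rho> (\<Phi> 0) p \<le> 1" using IH[of 0] by blast
    ultimately show "Fenv f \<rho> (Conj \<Phi>) p \<le> 1" by linarith
  next
    fix p p' :: 'p assume pp: "p \<le> p'"
    show "Fenv f \<rho> (Conj \<Phi>) p \<le> Fenv f \<rho> (Conj \<Phi>) p'"
      unfolding Fenv.simps
    proof (rule cINF_greatest)
      fix n
      have "(INF n. Fenv f \<rho> (\<Phi> n) p) \<le> Fenv f \<rho> (\<Phi> n) p" by (rule cINF_lower[OF bb]) simp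
      also have "\<dots> \<le> Fenv f \<rho> (\<Phi> n) p'" using IH pp by blast
      finally show "(INF n. Fenv f \<rho> (\<Phi> n) p) \<le> Fenv f \<rho> (\<Phi> n) p'" .
    qed auto
  qed
next
  case (Infx x \<phi>)
  have IH: "\<And>c. (\<forall>p. 0 \<le> Fenv f (\<rho>(x := Cst c)) \<phi> p \<and> Fenv f (\<rho>(x := Cst c)) \<phi> p \<le> 1) \<and>
    (\<forall>p p'. p \<le> p' \<longrightarrow> Fenv f (\<rho>(x := Cst c)) \<phi> p \<le> Fenv f (\<rho>(x := Cst c)) \<phi> p')"
  proof -
    fix c
    show "?thesis c"
    proof (rule Infx.IH)
      show "wf_fml arF arR \<phi>" using Infx.prems by simp
      show "wf_trm arF ((\<rho>(x := Cst c)) n)" for n using Infx.prems by simp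
      show "vars_trm ((\<rho>(x := Cst c)) n) = {}" if "n \<in> fv_fml \<phi>" for n
        using Infx.prems that by (cases "n = x") auto
    qed
  qed
  have bb: "bdd_below (range (\<lambda>c. Fenv f (\<rho>(x := Cst c)) \<phi> p))" for p
    using IH by (intro bdd_belowI[where m=0]) auto
  show ?case
  proof (intro conjI allI impI)
    fix p :: 'p
    show "0 \<le> Fenv f \<rho> (Infx x \<phi>) p" using IH by (auto intro: cINF_greatest)
    have "Fenv f \<rho> (Infx x \<phi>) p \<le> Fenv f (\<rho>(x := Cst 0)) \<phi> p" by (simp add: cINF_lower[OF bb])
    moreover have "Fenv f (\<rho>(x := Cst 0)) \<phi> p \<le> 1" using IH[of 0] by blast
    ultimately show "Fenv f \<rho> (Infx x \<phi>) p \<le> 1" by linarith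
  next
    fix p p' :: 'p assume pp: "p \<le> p'"
    show "Fenv f \<rho> (Infx x \<phi>) p \<le> Fenv f \<rho> (Infx x \<phi>) p'"
      unfolding Fenv.simps
    proof (rule cINF_greatest)
      fix c
      have "(INF c. Fenv f (\<rho>(x := Cst c)) \<phi> p) \<le> Fenv f (\<rho>(x := Cst c)) \<phi> p"
        by (rule cINF_lower[OF bb]) simp
      also have "\<dots> \<le> Fenv f (\<rho>(x := Cst c)) \<phi> p'" using IH pp by blast
      finally show "(INF c. Fenv f (\<rho>(x := Cst c)) \<phi> p) \<le> Fenv f (\<rho>(x := Cst c)) \<phi> p'" .
    qed auto
  qed
qed

lemma Fenv_subst:
  assumes "vars_trm t = {}"
  shows "Fenv f \<rho> (subst_fml x t \<phi>) p = Fenv f (\<rho>(x := t)) \<phi> p"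
proof (induction \<phi> arbitrary: \<rho> p)
  case (Atom a)
  have e: "(\<lambda>n. tsubst \<rho> (if n = x then t else Var n)) = (\<lambda>a. if a = x then t else \<rho> a)"
    using tsubst_closed[OF assms] by (auto simp: fun_eq_iff)
  show ?case by (cases a) (simp_all add: tsubst_tsubst e comp_def)
next
  case (Infx y \<phi>)
  show ?case
  proof (cases "y = x")
    case True
    have uu: "\<And>c. (\<rho>(x := t))(x := Cst c) = \<rho>(x := Cst c)" by simp
    show ?thesis unfolding True by (simp only: subst_fml.simps if_True Fenv.simps uu simp_thms)
  next
    case False
    have tw: "\<And>c. (\<rho>(y := Cst c))(x := t) = (\<rho>(x := t))(y := Cst c)"
      using False by (rule fun_upd_twist)
    show ?thesis using False by (simp only: subst_fml.simps if_False Fenv.simps Infx.IH tw)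
  qed
qed simp_all

theorem proposition2p9:
  fixes arF :: "'f::countable \<Rightarrow> nat" and arR :: "'r::countable \<Rightarrow> nat"
    and delta :: "('f,'r) atom \<Rightarrow> nat \<Rightarrow> real \<Rightarrow> real"
    and f :: "'p::order \<Rightarrow> ('f,'r) atom \<Rightarrow> real"
    and p :: 'p
  assumes "forcing_property arF arR delta f"
  shows
    "(\<forall>\<phi>. sentence \<phi> \<and> wf_fml arF arR \<phi> \<longrightarrow>
        Fw f p (Neg \<phi>) = 1 - (INF q\<in>{..p}. Fw f q \<phi>))
   \<and> (\<forall>\<phi>. sentence \<phi> \<and> wf_fml arF arR \<phi> \<longrightarrow>
        Fw f p (Half \<phi>) = Fw f p \<phi> / 2)
   \<and> (\<forall>\<phi> \<psi>. sentence \<phi> \<and> wf_fml arF arR \<phi> \<and> sentence \<psi> \<and> wf_fml arF arR \<psi> \<longrightarrow>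
        Fw f p (Dplus \<phi> \<psi>) =
          (SUP q\<in>{..p}. INF q'\<in>{..q}. min (Fw f q' \<phi> + Fw f q' \<psi>) 1))
   \<and> (\<forall>\<Phi>. (\<forall>n. sentence (\<Phi> n) \<and> wf_fml arF arR (\<Phi> n)) \<longrightarrow>
        Fw f p (Conj \<Phi>) = (SUP q\<in>{..p}. INF q'\<in>{..q}. INF n. Fw f q' (\<Phi> n)))
   \<and> (\<forall>x \<phi>. sentence (Infx x \<phi>) \<and> wf_fml arF arR \<phi> \<longrightarrow>
        Fw f p (Infx x \<phi>) =
          (SUP q\<in>{..p}. INF q'\<in>{..q}. INF c. Fw f q' (subst_fml x (Cst c) \<phi>)))"
proof -
  note fp = assms
  have FP: "(\<forall>q. 0 \<le> Fval f q \<phi> \<and> Fval f q \<phi> \<le> 1) \<and> (\<forall>q q'. q \<le> q' \<longrightarrow> Fval f q \<phi> \<le> Fval f q' \<phi>)"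
    if "sentence \<phi>" "wf_fml arF arR \<phi>" for \<phi>
    unfolding Fval_def by (rule Fenv_props[OF fp]) (use that in \<open>auto simp: sentence_def\<close>)
  have P1: "Fw f p (Neg \<phi>) = 1 - (INF q\<in>{..p}. Fw f q \<phi>)"
    if "sentence \<phi>" "wf_fml arF arR \<phi>" for \<phi>
  proof -
    have b: "\<And>q. 0 \<le> Fval f q \<phi> \<and> Fval f q \<phi> \<le> 1" using FP[OF that] by blast
    have "Fw f p (Neg \<phi>) = wop (\<lambda>q. 1 - (INF r\<in>{..q}. Fval f r \<phi>)) p"
      by (simp add: Fw_wop Fval_def)
    also have "\<dots> = 1 - (INF q\<in>{..p}. wop (\<lambda>q. Fval f q \<phi>) q)"
      by (rule neg_abs[where g="\<lambda>q. Fval f q \<phi>", OF b])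
    finally show ?thesis by (simp add: Fw_wop)
  qed
  have P2: "Fw f p (Half \<phi>) = Fw f p \<phi> / 2"
    if "sentence \<phi>" "wf_fml arF arR \<phi>" for \<phi>
  proof -
    have b: "\<And>q. 0 \<le> Fval f q \<phi> \<and> Fval f q \<phi> \<le> 1" using FP[OF that] by blast
    have "Fw f p (Half \<phi>) = wop (\<lambda>q. Fval f q \<phi> / 2) p"
      by (simp add: Fw_wop Fval_def)
    also have "\<dots> = wop (\<lambda>q. Fval f q \<phi>) p / 2"
      by (rule half_abs[where g="\<lambda>q. Fval f q \<phi>", OF b])
    finally show ?thesis by (simp add: Fw_wop)
  qed
  have P3: "Fw f p (Dplus \<phi> \<psi>) = (SUP q\<in>{..p}. INF q'\<in>{..q}. min (Fw f q' \<phi> + Fw f q' \<psi>) 1)"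
    if "sentence \<phi>" "wf_fml arF arR \<phi>" "sentence \<psi>" "wf_fml arF arR \<psi>" for \<phi> \<psi>
  proof -
    have b1: "\<And>q. 0 \<le> Fval f q \<phi> \<and> Fval f q \<phi> \<le> 1"
      and m1: "\<And>q q'. q \<le> q' \<Longrightarrow> Fval f q \<phi> \<le> Fval f q' \<phi>" using FP[OF that(1,2)] by blast+
    have b2: "\<And>q. 0 \<le> Fval f q \<psi> \<and> Fval f q \<psi> \<le> 1"
      and m2: "\<And>q q'. q \<le> q' \<Longrightarrow> Fval f q \<psi> \<le> Fval f q' \<psi>" using FP[OF that(3,4)] by blast+
    have "Fw f p (Dplus \<phi> \<psi>) = wop (\<lambda>q. min (Fval f q \<phi> + Fval f q \<psi>) 1) p"
      by (simp add: Fw_wop Fval_def)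
    also have "\<dots> = wop (\<lambda>q. min (wop (\<lambda>q. Fval f q \<phi>) q + wop (\<lambda>q. Fval f q \<psi>) q) 1) p"
      by (rule dplus_abs[of "\<lambda>q. Fval f q \<phi>" "\<lambda>q. Fval f q \<psi>", OF b1 m1 b2 m2])
    finally show ?thesis by (simp add: Fw_wop wop_def)
  qed
  have P4: "Fw f p (Conj \<Phi>) = (SUP q\<in>{..p}. INF q'\<in>{..q}. INF n. Fw f q' (\<Phi> n))"
    if "\<forall>n. sentence (\<Phi> n) \<and> wf_fml arF arR (\<Phi> n)" for \<Phi>
  proof -
    have b: "\<And>n q. 0 \<le> Fval f q (\<Phi> n) \<and> Fval f q (\<Phi> n) \<le> 1"
      and m: "\<And>n q q'. q \<le> q' \<Longrightarrow> Fval f q (\<Phi> n) \<le> Fval f q' (\<Phi> n)"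
      using FP that by blast+
    have "Fw f p (Conj \<Phi>) = wop (\<lambda>q. INF n. Fval f q (\<Phi> n)) p"
      by (simp add: Fw_wop Fval_def)
    also have "\<dots> = wop (\<lambda>q. INF n. wop (\<lambda>q. Fval f q (\<Phi> n)) q) p"
      by (rule conj_abs[where G="\<lambda>n q. Fval f q (\<Phi> n)", OF b m])
    finally show ?thesis by (simp add: Fw_wop wop_def)
  qed
  have P5: "Fw f p (Infx x \<phi>) = (SUP q\<in>{..p}. INF q'\<in>{..q}. INF c. Fw f q' (subst_fml x (Cst c) \<phi>))"
    if "sentence (Infx x \<phi>)" "wf_fml arF arR \<phi>" for x \<phi>
  proof -
    have G: "Fval f q (subst_fml x (Cst c) \<phi>) = Fenv f (Var(x := Cst c)) \<phi> q" for q c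
      unfolding Fval_def by (rule Fenv_subst) simp
    have FE: "(\<forall>q. 0 \<le> Fenv f (Var(x := Cst c)) \<phi> q \<and> Fenv f (Var(x := Cst c)) \<phi> q \<le> 1) \<and>
      (\<forall>q q'. q \<le> q' \<longrightarrow> Fenv f (Var(x := Cst c)) \<phi> q \<le> Fenv f (Var(x := Cst c)) \<phi> q')" for c
    proof (rule Fenv_props[OF fp that(2)])
      show "wf_trm arF ((Var(x := Cst c)) n)" for n by simp
      show "vars_trm ((Var(x := Cst c)) n) = {}" if "n \<in> fv_fml \<phi>" for n
        using \<open>sentence (Infx x \<phi>)\<close> that by (auto simp: sentence_def)
    qed
    have b: "\<And>c q. 0 \<le> Fval f q (subst_fml x (Cst c) \<phi>) \<and> Fval f q (subst_fml x (Cst c) \<phi>) \<le> 1"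
      and m: "\<And>c q q'. q \<le> q' \<Longrightarrow> Fval f q (subst_fml x (Cst c) \<phi>) \<le> Fval f q' (subst_fml x (Cst c) \<phi>)"
      unfolding G using FE by blast+
    have "Fw f p (Infx x \<phi>) = wop (\<lambda>q. INF c. Fval f q (subst_fml x (Cst c) \<phi>)) p"
      by (simp add: Fw_wop Fval_def G[unfolded Fval_def])
    also have "\<dots> = wop (\<lambda>q. INF c. wop (\<lambda>q. Fval f q (subst_fml x (Cst c) \<phi>)) q) p"
      by (rule conj_abs[where G="\<lambda>c q. Fval f q (subst_fml x (Cst c) \<phi>)", OF b m])
    finally show ?thesis by (simp add: Fw_wop wop_def)
  qed
  show ?thesis using P1 P2 P3 P4 P5 by blast
qed

end
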